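(* Let $\Pi=(P,\mathcal{L})$ be an $n$-dimensional projective space and $\Pi'=(P',\mathcal{L}')$ an $n$-dimensional linear space satisfying the exchange axiom, and let $f$ be a strong embedding of $\Pi$ to $\Pi'$. If for some $k\in\{0,\dots,n-1\}$ the mapping $G_{k}(f):\mathcal{G}_k(\Pi)\to\mathcal{G}_k(\Pi')$, $S\mapsto\overline{f(S)}$, is bijective, then $f$ is a collineation.
   Context: A linear space $\Pi=(P,\mathcal{L})$ is a set $P$ of points with a family $\mathcal{L}$ of proper subsets (lines) such that each line has at least two points and any two distinct points $p,q$ lie on exactly one line $pq$. Points are collinear if some line contains them. A subspace is a set $S\subset P$ with $pq\subset S$ for all distinct $p,q\in S$; $\overline{X}$ is the smallest subspace containing $X$. A set $X$ is independent if $\overline{X}$ is not spanned by a proper subset of $X$. A subspace is $m$-dimensional if $m+1$ is the smallest number of points spanning it. Exchange axiom: for every $X\subset P$ and $p_1,p_2\in P\setminus\overline{X}$, $p_2\in\overline{X\cup\{p_1\}}$ implies $p_1\in\overline{X\cup\{p_2\}}$. A projective space is a linear space in which every $2$-dimensional subspace is a projective plane (any two of its lines meet and each line has at least three points). $\mathcal{G}_k(\Pi)$ is the set of $k$-dimensional subspaces. A strong embedding is an injection $f:P\to P'$ sending collinear triples to collinear triples, non-collinear triples to non-collinear triples and independent sets to independent sets; then $\dim\overline{f(S)}=\dim S$ for every subspace $S$. A collineation is a bijection $f:P\to P'$ with $f(\mathcal{L})=\mathcal{L}'$. *)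

theory Defs
  imports Main
begin

definition linear_space :: "'a set \<Rightarrow> 'a set set \<Rightarrow> bool" where
  "linear_space P L \<longleftrightarrow>
     (\<forall>l\<in>L. l \<subseteq> P \<and> l \<noteq> P \<and> (\<exists>p q. p \<in> l \<and> q \<in> l \<and> p \<noteq> q)) \<and>
     (\<forall>p\<in>P. \<forall>q\<in>P. p \<noteq> q \<longrightarrow> (\<exists>!l. l \<in> L \<and> p \<in> l \<and> q \<in> l))"

definition line_through :: "'a set set \<Rightarrow> 'a \<Rightarrow> 'a \<Rightarrow> 'a set" where
  "line_through L p q = (THE l. l \<in> L \<and> p \<in> l \<and> q \<in> l)"

definition collinear_set :: "'a set set \<Rightarrow> 'a set \<Rightarrow> bool" where
  "collinear_set L X \<longleftrightarrow> (\<exists>l\<in>L. X \<subseteq> l)"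

definition subspace :: "'a set \<Rightarrow> 'a set set \<Rightarrow> 'a set \<Rightarrow> bool" where
  "subspace P L S \<longleftrightarrow> S \<subseteq> P \<and>
     (\<forall>p\<in>S. \<forall>q\<in>S. p \<noteq> q \<longrightarrow> line_through L p q \<subseteq> S)"

definition span :: "'a set \<Rightarrow> 'a set set \<Rightarrow> 'a set \<Rightarrow> 'a set" where
  "span P L X = \<Inter> {S. subspace P L S \<and> X \<subseteq> S}"

definition independent :: "'a set \<Rightarrow> 'a set set \<Rightarrow> 'a set \<Rightarrow> bool" where
  "independent P L X \<longleftrightarrow> X \<subseteq> P \<and> (\<forall>Y. Y \<subset> X \<longrightarrow> span P L Y \<noteq> span P L X)"

definition is_dim :: "'a set \<Rightarrow> 'a set set \<Rightarrow> 'a set \<Rightarrow> nat \<Rightarrow> bool" where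
  "is_dim P L S m \<longleftrightarrow> subspace P L S \<and>
     (\<exists>X. X \<subseteq> P \<and> finite X \<and> card X = m + 1 \<and> span P L X = S) \<and>
     (\<forall>X. X \<subseteq> P \<and> finite X \<and> span P L X = S \<longrightarrow> m + 1 \<le> card X)"

definition Grass :: "'a set \<Rightarrow> 'a set set \<Rightarrow> nat \<Rightarrow> 'a set set" where
  "Grass P L k = {S. is_dim P L S k}"

definition exchange_axiom :: "'a set \<Rightarrow> 'a set set \<Rightarrow> bool" where
  "exchange_axiom P L \<longleftrightarrow>
     (\<forall>X p1 p2. X \<subseteq> P \<and> p1 \<in> P - span P L X \<and> p2 \<in> P - span P L X \<and>
        p2 \<in> span P L (X \<union> {p1}) \<longrightarrow> p1 \<in> span P L (X \<union> {p2}))"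

definition projective_space :: "'a set \<Rightarrow> 'a set set \<Rightarrow> bool" where
  "projective_space P L \<longleftrightarrow> linear_space P L \<and>
     (\<forall>S. is_dim P L S 2 \<longrightarrow>
        (\<forall>l1\<in>L. \<forall>l2\<in>L. l1 \<subseteq> S \<and> l2 \<subseteq> S \<longrightarrow> l1 \<inter> l2 \<noteq> {}) \<and>
        (\<forall>l\<in>L. l \<subseteq> S \<longrightarrow> (\<exists>a b c. a \<in> l \<and> b \<in> l \<and> c \<in> l \<and> a \<noteq> b \<and> a \<noteq> c \<and> b \<noteq> c)))"

definition strong_embedding ::
  "'a set \<Rightarrow> 'a set set \<Rightarrow> 'b set \<Rightarrow> 'b set set \<Rightarrow> ('a \<Rightarrow> 'b) \<Rightarrow> bool" where
  "strong_embedding P L P' L' f \<longleftrightarrow>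
     f ` P \<subseteq> P' \<and> inj_on f P \<and>
     (\<forall>p\<in>P. \<forall>q\<in>P. \<forall>r\<in>P. collinear_set L {p, q, r} \<longrightarrow> collinear_set L' {f p, f q, f r}) \<and>
     (\<forall>p\<in>P. \<forall>q\<in>P. \<forall>r\<in>P. \<not> collinear_set L {p, q, r} \<longrightarrow> \<not> collinear_set L' {f p, f q, f r}) \<and>
     (\<forall>X. independent P L X \<longrightarrow> independent P' L' (f ` X))"

definition collineation ::
  "'a set \<Rightarrow> 'a set set \<Rightarrow> 'b set \<Rightarrow> 'b set set \<Rightarrow> ('a \<Rightarrow> 'b) \<Rightarrow> bool" where
  "collineation P L P' L' f \<longleftrightarrow> bij_betw f P P' \<and> (\<lambda>l. f ` l) ` L = L'"

end

theory Submission
  imports Defs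
begin

locale ls = fixes P :: "'a set" and L :: "'a set set"
  assumes ls: "linear_space P L"
begin

lemma line_ex1:
  assumes "p \<in> P" "q \<in> P" "p \<noteq> q"
  shows "\<exists>!l. l \<in> L \<and> p \<in> l \<and> q \<in> l"
proof -
  have "\<forall>p\<in>P. \<forall>q\<in>P. p \<noteq> q \<longrightarrow> (\<exists>!l. l \<in> L \<and> p \<in> l \<and> q \<in> l)"
    using ls unfolding linear_space_def by (rule conjunct2)
  then show ?thesis using assms by simp
qed

lemma line_props:
  assumes "p \<in> P" "q \<in> P" "p \<noteq> q"
  shows "line_through L p q \<in> L \<and> p \<in> line_through L p q \<and> q \<in> line_through L p q"
  unfolding line_through_def by (rule theI'[OF line_ex1[OF assms]])

lemma line_sub: "l \<in> L \<Longrightarrow> l \<subseteq> P"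
proof -
  have "\<forall>l\<in>L. l \<subseteq> P \<and> l \<noteq> P \<and> (\<exists>p q. p \<in> l \<and> q \<in> l \<and> p \<noteq> q)"
    using ls unfolding linear_space_def by (rule conjunct1)
  then show "l \<in> L \<Longrightarrow> l \<subseteq> P" by simp
qed

lemma line_unique:
  assumes "l \<in> L" "p \<in> l" "q \<in> l" "p \<noteq> q"
  shows "line_through L p q = l"
proof -
  have "p \<in> P" "q \<in> P" using assms line_sub by auto
  show ?thesis unfolding line_through_def
    by (rule the1_equality[OF line_ex1[OF \<open>p \<in> P\<close> \<open>q \<in> P\<close> assms(4)]]) (use assms in blast)
qed

lemma line_sym: "line_through L p q = line_through L q p"
proof -
  have "(\<lambda>l. l \<in> L \<and> p \<in> l \<and> q \<in> l) = (\<lambda>l. l \<in> L \<and> q \<in> l \<and> p \<in> l)" by auto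
  then show ?thesis unfolding line_through_def by simp
qed

lemma line_subspace: assumes "l \<in> L" shows "subspace P L l"
  unfolding subspace_def
proof (intro conjI ballI impI)
  show "l \<subseteq> P" using line_sub[OF assms] .
  fix p q assume "p \<in> l" "q \<in> l" "p \<noteq> q"
  then show "line_through L p q \<subseteq> l" using line_unique[OF assms] by simp
qed

lemma P_subspace: "subspace P L P"
  unfolding subspace_def
proof (intro conjI ballI impI)
  fix p q assume "p \<in> P" "q \<in> P" "p \<noteq> q"
  then have "line_through L p q \<in> L" using line_props by simp
  then show "line_through L p q \<subseteq> P" by (rule line_sub)
qed simp

lemma span_inc: "X \<subseteq> span P L X"
  unfolding span_def by (rule Inter_greatest) simp

lemma span_least: "subspace P L S \<Longrightarrow> X \<subseteq> S \<Longrightarrow> span P L X \<subseteq> S"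
  unfolding span_def by (rule Inter_lower) simp

lemma span_sub: "X \<subseteq> P \<Longrightarrow> span P L X \<subseteq> P"
  by (rule span_least[OF P_subspace])

lemma span_mono: "X \<subseteq> Y \<Longrightarrow> span P L X \<subseteq> span P L Y"
  unfolding span_def by (rule Inter_anti_mono) (simp add: Collect_mono_iff subset_trans)

lemma subspaceD: "subspace P L S \<Longrightarrow> p \<in> S \<Longrightarrow> q \<in> S \<Longrightarrow> p \<noteq> q \<Longrightarrow> line_through L p q \<subseteq> S"
  unfolding subspace_def by (elim conjE) (drule bspec, assumption, drule bspec, assumption, simp)

lemma subspace_sub: "subspace P L S \<Longrightarrow> S \<subseteq> P"
  unfolding subspace_def by (rule conjunct1)

lemma subspaceI: "S \<subseteq> P \<Longrightarrow> (\<And>p q. p \<in> S \<Longrightarrow> q \<in> S \<Longrightarrow> p \<noteq> q \<Longrightarrow> line_through L p q \<subseteq> S) \<Longrightarrow> subspace P L S"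
  unfolding subspace_def by simp

lemma span_subspace: 
  assumes "X \<subseteq> P" shows "subspace P L (span P L X)"
proof (rule subspaceI)
  show "span P L X \<subseteq> P" using span_sub assms .
  fix p q assume pq: "p \<in> span P L X" "q \<in> span P L X" "p \<noteq> q"
  show "line_through L p q \<subseteq> span P L X"
    unfolding span_def
  proof (rule Inter_greatest)
    fix S assume "S \<in> {S. subspace P L S \<and> X \<subseteq> S}"
    then have S: "subspace P L S" "X \<subseteq> S" by auto
    have "span P L X \<subseteq> S" using span_least[OF S] .
    then have "p \<in> S" "q \<in> S" using pq by auto
    then show "line_through L p q \<subseteq> S" using subspaceD[OF S(1)] pq(3) by simp
  qed
qed

lemma span_of_subspace: "subspace P L S \<Longrightarrow> span P L S = S"
  using span_least[of S S] span_inc[of S] by simp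

lemma span_idem: "X \<subseteq> P \<Longrightarrow> span P L (span P L X) = span P L X"
  by (rule span_of_subspace, rule span_subspace)

lemma span_sub_span: "A \<subseteq> span P L Y \<Longrightarrow> Y \<subseteq> P \<Longrightarrow> span P L A \<subseteq> span P L Y"
  by (rule span_least[OF span_subspace])

lemma span_empty: "span P L {} = {}"
proof -
  have "subspace P L {}" by (rule subspaceI) auto
  then show ?thesis using span_least[of "{}" "{}"] by simp
qed

lemma span_single: "p \<in> P \<Longrightarrow> span P L {p} = {p}"
proof -
  assume p: "p \<in> P"
  have "subspace P L {p}" by (rule subspaceI) (use p in auto)
  then show ?thesis using span_least[of "{p}" "{p}"] span_inc[of "{p}"] by simp
qed

lemma span_pair: assumes "p \<in> P" "q \<in> P" "p \<noteq> q" shows "span P L {p,q} = line_through L p q"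
proof
  have l: "line_through L p q \<in> L" "p \<in> line_through L p q" "q \<in> line_through L p q"
    using line_props[OF assms] by auto
  show "span P L {p,q} \<subseteq> line_through L p q"
    using span_least[OF line_subspace[OF l(1)]] l by simp
  have "subspace P L (span P L {p,q})" using assms by (intro span_subspace) simp
  moreover have "p \<in> span P L {p,q}" "q \<in> span P L {p,q}" using span_inc[of "{p,q}"] by auto
  ultimately show "line_through L p q \<subseteq> span P L {p,q}" using subspaceD assms(3) by blast
qed

lemma indep_iff: "independent P L X \<longleftrightarrow> X \<subseteq> P \<and> (\<forall>x\<in>X. x \<notin> span P L (X - {x}))"
proof
  assume a: "independent P L X"
  then have XP: "X \<subseteq> P" unfolding independent_def by (rule conjunct1)
  have a2: "\<And>Y. Y \<subset> X \<Longrightarrow> span P L Y \<noteq> span P L X" using a unfolding independent_def by blast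
  have "\<forall>x\<in>X. x \<notin> span P L (X - {x})"
  proof (rule ballI, rule notI)
    fix x assume x: "x \<in> X" "x \<in> span P L (X - {x})"
    have "X - {x} \<subseteq> span P L (X - {x})" by (rule span_inc)
    with x have "X \<subseteq> span P L (X - {x})" by blast
    then have "span P L X \<subseteq> span P L (X - {x})" using span_sub_span XP by blast
    moreover have "span P L (X - {x}) \<subseteq> span P L X" by (rule span_mono) (rule Diff_subset)
    ultimately have "span P L (X - {x}) = span P L X" by (rule antisym[rotated])
    moreover have "X - {x} \<subset> X" using x by blast
    ultimately show False using a2 by blast
  qed
  then show "X \<subseteq> P \<and> (\<forall>x\<in>X. x \<notin> span P L (X - {x}))" using XP by (rule conjI[rotated])
next
  assume a: "X \<subseteq> P \<and> (\<forall>x\<in>X. x \<notin> span P L (X - {x}))"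
  show "independent P L X" unfolding independent_def
  proof (rule conjI)
    show "X \<subseteq> P" using a by (rule conjunct1)
    show "\<forall>Y. Y \<subset> X \<longrightarrow> span P L Y \<noteq> span P L X"
    proof (rule allI, rule impI)
    fix Y assume Y: "Y \<subset> X"
    then obtain x where x: "x \<in> X" "x \<notin> Y" by blast
    show "span P L Y \<noteq> span P L X"
    proof
      assume e: "span P L Y = span P L X"
      have "x \<in> span P L X" using x span_inc by blast
      also have "\<dots> = span P L Y" using e by simp
      also have "\<dots> \<subseteq> span P L (X - {x})" using Y x by (intro span_mono) blast
      finally show False using a x by blast
    qed
    qed
  qed
qed

lemma indep_subset: assumes "independent P L X" "Y \<subseteq> X" shows "independent P L Y"
  unfolding indep_iff
proof (intro conjI ballI)
  show "Y \<subseteq> P" using assms unfolding indep_iff by blast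
  fix y assume y: "y \<in> Y"
  have "span P L (Y - {y}) \<subseteq> span P L (X - {y})" using assms(2) by (intro span_mono) blast
  then show "y \<notin> span P L (Y - {y})" using assms y unfolding indep_iff by blast
qed

lemma dim_ge: "is_dim P L S m \<Longrightarrow> finite Y \<Longrightarrow> Y \<subseteq> P \<Longrightarrow> span P L Y = S \<Longrightarrow> m + 1 \<le> card Y"
  unfolding is_dim_def by blast

end

locale els = ls P L for P :: "'a set" and L +
  assumes ex: "exchange_axiom P L"
begin

lemma exch:
  assumes "X \<subseteq> P" "p1 \<in> P" "p1 \<notin> span P L X" "p2 \<in> P" "p2 \<notin> span P L X"
    "p2 \<in> span P L (X \<union> {p1})"
  shows "p1 \<in> span P L (X \<union> {p2})"
proof -
  have "\<forall>X p1 p2. X \<subseteq> P \<and> p1 \<in> P - span P L X \<and> p2 \<in> P - span P L X \<and>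
        p2 \<in> span P L (X \<union> {p1}) \<longrightarrow> p1 \<in> span P L (X \<union> {p2})"
    using ex unfolding exchange_axiom_def .
  then have "X \<subseteq> P \<and> p1 \<in> P - span P L X \<and> p2 \<in> P - span P L X \<and>
        p2 \<in> span P L (X \<union> {p1}) \<longrightarrow> p1 \<in> span P L (X \<union> {p2})" by blast
  then show ?thesis using assms by blast
qed

lemma indep_sub: "independent P L X \<Longrightarrow> X \<subseteq> P"
  unfolding independent_def by (rule conjunct1)

lemma indep_notin: "independent P L X \<Longrightarrow> x \<in> X \<Longrightarrow> x \<notin> span P L (X - {x})"
  unfolding indep_iff by blast

lemma indep_insert:
  assumes X: "independent P L X" and p: "p \<in> P" "p \<notin> span P L X"
  shows "independent P L (insert p X)"
  unfolding indep_iff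
proof (intro conjI ballI)
  have XP: "X \<subseteq> P" using indep_sub[OF X] .
  then show "insert p X \<subseteq> P" using p by simp
  have pX: "p \<notin> X" using p span_inc by blast
  fix x assume x: "x \<in> insert p X"
  show "x \<notin> span P L (insert p X - {x})"
  proof (cases "x = p")
    case True
    then have "insert p X - {x} = X" using pX by auto
    then show ?thesis using True p by simp
  next
    case False
    then have xX: "x \<in> X" using x by simp
    have e: "insert p X - {x} = (X - {x}) \<union> {p}" using False by auto
    show ?thesis
    proof
      assume a: "x \<in> span P L (insert p X - {x})"
      have n1: "x \<notin> span P L (X - {x})" using indep_notin[OF X xX] .
      have "span P L (X - {x}) \<subseteq> span P L X" by (rule span_mono) blast
      then have n2: "p \<notin> span P L (X - {x})" using p by blast
      have "p \<in> span P L ((X - {x}) \<union> {x})"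
        by (rule exch) (use XP p n1 n2 a e xX in auto)
      moreover have "(X - {x}) \<union> {x} = X" using xX by auto
      ultimately show False using p by simp
    qed
  qed
qed

lemma steinitz_aux:
  assumes Y: "finite Y" "Y \<subseteq> P"
  shows "\<And>X. finite X \<Longrightarrow> independent P L X \<Longrightarrow> X \<subseteq> span P L Y \<Longrightarrow> card (X - Y) = d \<Longrightarrow> card X \<le> card Y"
proof (induction d)
  case 0
  then have "X \<subseteq> Y" by auto
  then show ?case using Y card_mono by blast
next
  case (Suc d)
  then obtain x where x: "x \<in> X" "x \<notin> Y" by (metis Diff_iff card_0_eq finite_Diff nat.distinct(1) subsetI subset_empty)
  have XP: "X \<subseteq> P" using indep_sub[OF Suc.prems(2)] .
  have nx: "x \<notin> span P L (X - {x})" using indep_notin[OF Suc.prems(2) x(1)] .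
  have "\<exists>y\<in>Y. y \<notin> span P L (X - {x})"
  proof (rule ccontr)
    assume "\<not> ?thesis"
    then have "Y \<subseteq> span P L (X - {x})" by blast
    then have "span P L Y \<subseteq> span P L (X - {x})" using XP by (intro span_sub_span) auto
    then show False using Suc.prems(3) x nx by blast
  qed
  then obtain y where y: "y \<in> Y" "y \<notin> span P L (X - {x})" by blast
  have yX: "y \<notin> X" using y x span_inc[of "X - {x}"] by blast
  define X' where "X' = insert y (X - {x})"
  have i: "independent P L X'" unfolding X'_def
    by (rule indep_insert) (use indep_subset[OF Suc.prems(2)] y Y in auto)
  have "X' \<subseteq> span P L Y" unfolding X'_def using Suc.prems(3) y span_inc[of Y] by blast
  moreover have "X' - Y = (X - Y) - {x}" unfolding X'_def using y x by auto
  then have "card (X' - Y) = d" using Suc.prems(4) x Suc.prems(1) by simp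
  moreover have "card X' = card X" unfolding X'_def using yX x Suc.prems(1)
    by (simp add: card_insert_if) (metis One_nat_def Suc_pred card_gt_0_iff empty_iff)
  ultimately show ?case using Suc.IH[of X'] i Suc.prems(1) unfolding X'_def by simp
qed

lemma steinitz:
  "finite Y \<Longrightarrow> Y \<subseteq> P \<Longrightarrow> finite X \<Longrightarrow> independent P L X \<Longrightarrow> X \<subseteq> span P L Y \<Longrightarrow> card X \<le> card Y"
  using steinitz_aux by blast

lemma dim_of_indep:
  assumes "independent P L X" "finite X" "card X = Suc m"
  shows "is_dim P L (span P L X) m"
  unfolding is_dim_def
proof (intro conjI)
  have XP: "X \<subseteq> P" using indep_sub[OF assms(1)] .
  show "subspace P L (span P L X)" using span_subspace[OF XP] .
  show "\<exists>Y. Y \<subseteq> P \<and> finite Y \<and> card Y = m + 1 \<and> span P L Y = span P L X"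
    using XP assms by auto
  show "\<forall>Y. Y \<subseteq> P \<and> finite Y \<and> span P L Y = span P L X \<longrightarrow> m + 1 \<le> card Y"
  proof (intro allI impI)
    fix Y assume Y: "Y \<subseteq> P \<and> finite Y \<and> span P L Y = span P L X"
    have "X \<subseteq> span P L Y" using Y span_inc[of X] by simp
    then have "card X \<le> card Y" using steinitz Y assms by blast
    then show "m + 1 \<le> card Y" using assms by simp
  qed
qed

lemma basis_of_dim:
  assumes "is_dim P L S m"
  obtains X where "independent P L X" "finite X" "card X = Suc m" "span P L X = S" "X \<subseteq> P"
proof -
  obtain X where X: "X \<subseteq> P" "finite X" "card X = m + 1" "span P L X = S"
    using assms unfolding is_dim_def by blast
  have "independent P L X" unfolding indep_iff
  proof (intro conjI ballI notI)
    show "X \<subseteq> P" using X by simp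
    fix x assume x: "x \<in> X" "x \<in> span P L (X - {x})"
    have "X \<subseteq> span P L (X - {x})" using x span_inc[of "X - {x}"] by blast
    then have "span P L X \<subseteq> span P L (X - {x})" using X by (intro span_sub_span) auto
    moreover have "span P L (X - {x}) \<subseteq> span P L X" by (rule span_mono) blast
    ultimately have "span P L (X - {x}) = S" using X by simp
    then have "m + 1 \<le> card (X - {x})" using dim_ge[OF assms, of "X - {x}"] X by auto
    then show False using X x by (simp add: card_Diff_singleton)
  qed
  then show ?thesis using that X by simp
qed

lemma dim_eq_sub:
  assumes A: "is_dim P L A m" and B: "is_dim P L B m" and AB: "A \<subseteq> B"
  shows "A = B"
proof (rule ccontr)
  assume "A \<noteq> B"
  then obtain q where q: "q \<in> B" "q \<notin> A" using AB by blast
  obtain X where X: "independent P L X" "finite X" "card X = Suc m" "span P L X = A" "X \<subseteq> P"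
    using basis_of_dim[OF A] by blast
  obtain Y where Y: "independent P L Y" "finite Y" "card Y = Suc m" "span P L Y = B" "Y \<subseteq> P"
    using basis_of_dim[OF B] by blast
  have qP: "q \<in> P" using q Y span_sub by blast
  have i: "independent P L (insert q X)" using indep_insert[OF X(1) qP] q X by simp
  have qX: "q \<notin> X" using q X span_inc by blast
  have "insert q X \<subseteq> span P L Y" using Y X AB q span_inc[of X] by blast
  then have "card (insert q X) \<le> card Y" using steinitz Y X i by blast
  then show False using qX X Y by simp
qed

lemma nonfull:
  assumes "is_dim P L P n" "X \<subseteq> P" "finite X" "card X \<le> n"
  shows "\<exists>q\<in>P. q \<notin> span P L X"
proof (rule ccontr)
  assume "\<not> ?thesis"
  then have "P \<subseteq> span P L X" by blast
  then have "span P L X = P" using span_sub[OF assms(2)] by blast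
  then show False using dim_ge[OF assms(1) assms(3) assms(2)] assms(4) by simp
qed

lemma extend:
  assumes "is_dim P L P n"
  shows "\<And>X. independent P L X \<Longrightarrow> finite X \<Longrightarrow> card X + d \<le> Suc n \<Longrightarrow>
     \<exists>Y. X \<subseteq> Y \<and> independent P L Y \<and> finite Y \<and> card Y = card X + d"
proof (induction d)
  case 0 then show ?case by (intro exI[of _ X]) simp
next
  case (Suc d)
  have cX: "card X \<le> n" using Suc.prems(3) by simp
  obtain q where q: "q \<in> P" "q \<notin> span P L X"
    using nonfull[OF assms indep_sub[OF Suc.prems(1)] Suc.prems(2) cX] by blast
  have qX: "q \<notin> X" using q span_inc by blast
  have i: "independent P L (insert q X)" using indep_insert[OF Suc.prems(1) q] .
  have "card (insert q X) + d \<le> Suc n" using qX Suc.prems by simp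
  then obtain Y where Y: "insert q X \<subseteq> Y" "independent P L Y" "finite Y" "card Y = card (insert q X) + d"
    using Suc.IH[OF i] Suc.prems(2) by blast
  have "card Y = card X + Suc d" using Y(4) qX Suc.prems(2) by simp
  then show ?case using Y by blast
qed

lemma modular:
  assumes E: "finite E"
  shows "\<And>A B. A \<subseteq> B \<Longrightarrow> independent P L (B \<union> E) \<Longrightarrow> B \<inter> E = {} \<Longrightarrow>
     span P L B \<inter> span P L (A \<union> E) \<subseteq> span P L A"
  using E
proof (induction E rule: finite_induct)
  case empty then show ?case by simp
next
  case (insert e E)
  show ?case
  proof
    fix x assume x: "x \<in> span P L B \<inter> span P L (A \<union> insert e E)"
    have BEP: "B \<union> insert e E \<subseteq> P" using indep_sub[OF insert.prems(2)] .
    have i: "independent P L (B \<union> E)" using indep_subset[OF insert.prems(2)] by blast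
    show "x \<in> span P L A"
    proof (cases "x \<in> span P L (A \<union> E)")
      case True
      then show ?thesis using insert.IH[OF insert.prems(1) i] insert.prems(3) x by blast
    next
      case False
      have eB: "e \<notin> B \<union> E" using insert.prems(3) insert.hyps(2) by blast
      have ne: "e \<notin> span P L (B \<union> E)"
        using indep_notin[OF insert.prems(2), of e] eB
        by (metis Diff_insert_absorb Un_insert_right insertI1 Un_iff)
      have "span P L (A \<union> E) \<subseteq> span P L (B \<union> E)" using insert.prems(1) by (intro span_mono) blast
      then have ne2: "e \<notin> span P L (A \<union> E)" using ne by blast
      have xP: "x \<in> P" using x span_sub[of B] BEP by blast
      have "e \<in> span P L ((A \<union> E) \<union> {x})"
        by (rule exch) (use BEP insert.prems(1) xP ne2 False x in auto)
      moreover have "span P L ((A \<union> E) \<union> {x}) \<subseteq> span P L (B \<union> E)"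
      proof (rule span_sub_span)
        have "span P L B \<subseteq> span P L (B \<union> E)" by (rule span_mono) blast
        then show "A \<union> E \<union> {x} \<subseteq> span P L (B \<union> E)"
          using x insert.prems(1) span_inc[of "B \<union> E"] by blast
        show "B \<union> E \<subseteq> P" using BEP by blast
      qed
      ultimately show ?thesis using ne by blast
    qed
  qed
qed

end

locale pls = ls P L for P :: "'a set" and L +
  assumes proj: "projective_space P L"
begin

lemma plane_meet:
  assumes "is_dim P L S 2" "l1 \<in> L" "l2 \<in> L" "l1 \<subseteq> S" "l2 \<subseteq> S"
  shows "l1 \<inter> l2 \<noteq> {}"
proof -
  have "\<forall>S. is_dim P L S 2 \<longrightarrow>
        (\<forall>l1\<in>L. \<forall>l2\<in>L. l1 \<subseteq> S \<and> l2 \<subseteq> S \<longrightarrow> l1 \<inter> l2 \<noteq> {}) \<and>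
        (\<forall>l\<in>L. l \<subseteq> S \<longrightarrow> (\<exists>a b c. a \<in> l \<and> b \<in> l \<and> c \<in> l \<and> a \<noteq> b \<and> a \<noteq> c \<and> b \<noteq> c))"
    using proj unfolding projective_space_def by (rule conjunct2)
  then have "\<forall>l1\<in>L. \<forall>l2\<in>L. l1 \<subseteq> S \<and> l2 \<subseteq> S \<longrightarrow> l1 \<inter> l2 \<noteq> {}"
    using assms(1) by blast
  then show ?thesis using assms by blast
qed

lemma plane_dim:
  assumes P: "a \<in> P" "b \<in> P" "c \<in> P" "b \<noteq> c" "a \<notin> line_through L b c"
  shows "is_dim P L (span P L {a,b,c}) 2"
  unfolding is_dim_def
proof (intro conjI allI impI)
  have lbc: "line_through L b c \<in> L" "b \<in> line_through L b c" "c \<in> line_through L b c"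
    using line_props[OF P(2,3,4)] by auto
  have ab: "a \<noteq> b" "a \<noteq> c" using lbc P(5) by auto
  show "subspace P L (span P L {a, b, c})" using P by (intro span_subspace) auto
  show "\<exists>X. X \<subseteq> P \<and> finite X \<and> card X = 2 + 1 \<and> span P L X = span P L {a, b, c}"
    using P ab by (intro exI[of _ "{a,b,c}"]) auto
  fix Y assume Y: "Y \<subseteq> P \<and> finite Y \<and> span P L Y = span P L {a, b, c}"
  have abc: "{a,b,c} \<subseteq> span P L Y" using Y span_inc[of "{a,b,c}"] by simp
  show "2 + 1 \<le> card Y"
  proof (rule ccontr)
    assume "\<not> 2 + 1 \<le> card Y"
    then have "card Y = 0 \<or> card Y = 1 \<or> card Y = 2" by auto
    then show False
    proof (elim disjE)
      assume "card Y = 0"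
      then have "Y = {}" using Y by simp
      then show False using abc span_empty by simp
    next
      assume "card Y = 1"
      then obtain y where "Y = {y}" using card_1_singletonE by blast
      moreover have "y \<in> P" using Y \<open>Y = {y}\<close> by simp
      ultimately have "span P L Y = {y}" using span_single by simp
      then have "a = y" "b = y" using abc by auto
      then show False using ab by simp
    next
      assume "card Y = 2"
      then obtain y z where yz: "Y = {y,z}" "y \<noteq> z" by (meson card_2_iff)
      have yzP: "y \<in> P" "z \<in> P" using Y yz(1) by auto
      have sp: "span P L Y = line_through L y z" using span_pair[OF yzP yz(2)] yz(1) by simp
      have lyz: "line_through L y z \<in> L" using line_props[OF yzP yz(2)] by (rule conjunct1)
      have bc: "b \<in> line_through L y z" "c \<in> line_through L y z" using abc sp by auto
      have "line_through L b c = line_through L y z" by (rule line_unique[OF lyz bc P(4)])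
      moreover have "a \<in> line_through L y z" using abc sp by auto
      ultimately show False using P(5) by simp
    qed
  qed
qed

definition J :: "'a set \<Rightarrow> 'a \<Rightarrow> 'a set" where
  "J H a = insert a (H \<union> {x. \<exists>h\<in>H. x \<in> line_through L a h})"

lemma J_line:
  assumes H: "subspace P L H" and a: "a \<in> P" "a \<notin> H" and h: "h \<in> H" and w: "w \<in> line_through L a h"
  shows "w \<in> J H a"
  using h w unfolding J_def by blast

lemma J_plane:
  assumes H: "subspace P L H" and a: "a \<in> P" "a \<notin> H" and h: "h1 \<in> H" "h2 \<in> H" "h1 \<noteq> h2"
    and w: "w \<in> span P L {a, h1, h2}"
  shows "w \<in> J H a"
proof (cases "w = a")
  case True then show ?thesis unfolding J_def by simp
next
  case False
  have HP: "H \<subseteq> P" using subspace_sub[OF H] .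
  have h12: "h1 \<in> P" "h2 \<in> P" using h HP by auto
  have lh: "line_through L h1 h2 \<subseteq> H" using subspaceD[OF H h] .
  have na: "a \<notin> line_through L h1 h2" using lh a by blast
  have dim: "is_dim P L (span P L {a,h1,h2}) 2" using plane_dim[OF a(1) h12 h(3) na] .
  have sub: "subspace P L (span P L {a,h1,h2})" using a h12 by (intro span_subspace) auto
  have ins: "{a,h1,h2} \<subseteq> span P L {a,h1,h2}" by (rule span_inc)
  have wP: "w \<in> P" using w span_sub[of "{a,h1,h2}"] a h12 by blast
  have l1: "line_through L a w \<in> L" "a \<in> line_through L a w" "w \<in> line_through L a w"
    using line_props[OF a(1) wP] False by auto
  have l2: "line_through L h1 h2 \<in> L" using line_props[OF h12 h(3)] by simp
  have s1: "line_through L a w \<subseteq> span P L {a,h1,h2}" using subspaceD[OF sub, of a w] ins w False by simp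
  have s2: "line_through L h1 h2 \<subseteq> span P L {a,h1,h2}" using subspaceD[OF sub, of h1 h2] ins h(3) by simp
  obtain g where g: "g \<in> line_through L a w" "g \<in> line_through L h1 h2"
    using plane_meet[OF dim l1(1) l2 s1 s2] by blast
  have gH: "g \<in> H" using g lh by blast
  have ga: "g \<noteq> a" using gH a by blast
  have "line_through L a g = line_through L a w" using line_unique[OF l1(1) l1(2) g(1) ga[symmetric]] .
  then have "w \<in> line_through L a g" using l1 by simp
  then show ?thesis using gH unfolding J_def by blast
qed

lemma J_point_line:
  assumes H: "subspace P L H" and a: "a \<in> P" "a \<notin> H" and x: "x \<in> J H a" and ne: "H \<noteq> {}"
  shows "\<exists>h\<in>H. x \<in> line_through L a h"
proof -
  have HP: "H \<subseteq> P" using subspace_sub[OF H] .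
  obtain h0 where h0: "h0 \<in> H" using ne by blast
  have "x = a \<or> x \<in> H \<or> (\<exists>h\<in>H. x \<in> line_through L a h)" using x unfolding J_def by blast
  then show ?thesis
  proof (elim disjE)
    assume "x = a"
    then show ?thesis using h0 line_props[of a h0] a HP by blast
  next
    assume xH: "x \<in> H"
    then show ?thesis using line_props[of a x] a HP by blast
  qed blast
qed

lemma J_subspace:
  assumes H: "subspace P L H" and a: "a \<in> P" "a \<notin> H"
  shows "subspace P L (J H a)"
proof (rule subspaceI)
  have HP: "H \<subseteq> P" using subspace_sub[OF H] .
  show "J H a \<subseteq> P"
  proof
    fix x assume "x \<in> J H a"
    then have "x = a \<or> x \<in> H \<or> (\<exists>h\<in>H. x \<in> line_through L a h)" unfolding J_def by blast
    then show "x \<in> P"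
    proof (elim disjE)
      assume "\<exists>h\<in>H. x \<in> line_through L a h"
      then obtain h where "h \<in> H" "x \<in> line_through L a h" by blast
      moreover have "h \<noteq> a" using \<open>h \<in> H\<close> a by blast
      ultimately show "x \<in> P" using line_props[of a h] line_sub a HP by blast
    qed (use a HP in auto)
  qed
  fix x y assume xy: "x \<in> J H a" "y \<in> J H a" "x \<noteq> y"
  show "line_through L x y \<subseteq> J H a"
  proof (cases "H = {}")
    case True
    then show ?thesis using xy unfolding J_def by simp
  next
    case False
    obtain hx where hx: "hx \<in> H" "x \<in> line_through L a hx" using J_point_line[OF H a xy(1) False] by blast
    obtain hy where hy: "hy \<in> H" "y \<in> line_through L a hy" using J_point_line[OF H a xy(2) False] by blast
    have hxa: "hx \<noteq> a" "hy \<noteq> a" using hx hy a by auto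
    have hxP: "hx \<in> P" "hy \<in> P" using hx hy HP by auto
    show ?thesis
    proof (cases "hx = hy")
      case True
      have "line_through L a hx \<in> L" using line_props[OF a(1) hxP(1)] hxa by simp
      then have "line_through L x y = line_through L a hx" using line_unique hx hy True xy(3) by simp
      then show ?thesis using J_line[OF H a hx(1)] by blast
    next
      case False
      have sub: "subspace P L (span P L {a,hx,hy})" using a hxP by (intro span_subspace) auto
      have ins: "{a,hx,hy} \<subseteq> span P L {a,hx,hy}" by (rule span_inc)
      have "line_through L a hx = span P L {a,hx}" using span_pair[OF a(1) hxP(1)] hxa by simp
      also have "\<dots> \<subseteq> span P L {a,hx,hy}" by (rule span_mono) blast
      finally have xs: "x \<in> span P L {a,hx,hy}" using hx by blast
      have "line_through L a hy = span P L {a,hy}" using span_pair[OF a(1) hxP(2)] hxa by simp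
      also have "\<dots> \<subseteq> span P L {a,hx,hy}" by (rule span_mono) blast
      finally have ys: "y \<in> span P L {a,hx,hy}" using hy by blast
      have "line_through L x y \<subseteq> span P L {a,hx,hy}" using subspaceD[OF sub xs ys xy(3)] .
      then show ?thesis using J_plane[OF H a hx(1) hy(1) False] by blast
    qed
  qed
qed

lemma span_insert_J:
  assumes H: "subspace P L H" and a: "a \<in> P" "a \<notin> H" and x: "x \<in> span P L (insert a H)"
  shows "x = a \<or> x \<in> H \<or> (\<exists>h\<in>H. x \<in> line_through L a h)"
proof -
  have "insert a H \<subseteq> J H a" unfolding J_def by blast
  then have "span P L (insert a H) \<subseteq> J H a" using span_least[OF J_subspace[OF H a]] by blast
  then show ?thesis using x unfolding J_def by blast
qed

lemma proj_exchange: "exchange_axiom P L"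
  unfolding exchange_axiom_def
proof (intro allI impI, elim conjE)
  fix X p1 p2 assume X: "X \<subseteq> P" and p1: "p1 \<in> P - span P L X" and p2: "p2 \<in> P - span P L X"
    and in2: "p2 \<in> span P L (X \<union> {p1})"
  let ?H = "span P L X"
  have H: "subspace P L ?H" using span_subspace[OF X] .
  have "X \<union> {p1} \<subseteq> insert p1 ?H" using span_inc[of X] by blast
  then have "span P L (X \<union> {p1}) \<subseteq> span P L (insert p1 ?H)" by (rule span_mono)
  then have "p2 = p1 \<or> p2 \<in> ?H \<or> (\<exists>h\<in>?H. p2 \<in> line_through L p1 h)"
    using span_insert_J[OF H, of p1 p2] p1 in2 by blast
  then show "p1 \<in> span P L (X \<union> {p2})"
  proof (elim disjE)
    assume "p2 = p1" then show ?thesis using span_inc[of "X \<union> {p2}"] by blast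
  next
    assume "p2 \<in> ?H" then show ?thesis using p2 by blast
  next
    assume "\<exists>h\<in>?H. p2 \<in> line_through L p1 h"
    then obtain h where h: "h \<in> ?H" "p2 \<in> line_through L p1 h" by blast
    have hP: "h \<in> P" using h span_sub[OF X] by blast
    have h1: "h \<noteq> p1" "h \<noteq> p2" using h p1 p2 by auto
    have l: "line_through L p1 h \<in> L" "p1 \<in> line_through L p1 h" "h \<in> line_through L p1 h"
      using line_props[of p1 h] p1 hP h1 by auto
    have "line_through L p2 h = line_through L p1 h" using line_unique[OF l(1) h(2) l(3) h1(2)[symmetric]] .
    then have "p1 \<in> line_through L p2 h" using l by simp
    moreover have "line_through L p2 h = span P L {p2, h}" using span_pair[of p2 h] p2 hP h1 by simp
    moreover have "span P L {p2, h} \<subseteq> span P L (X \<union> {p2})"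
    proof (rule span_sub_span)
      have "?H \<subseteq> span P L (X \<union> {p2})" by (rule span_mono) blast
      then show "{p2, h} \<subseteq> span P L (X \<union> {p2})" using h span_inc[of "X \<union> {p2}"] by blast
      show "X \<union> {p2} \<subseteq> P" using X p2 by blast
    qed
    ultimately show ?thesis by blast
  qed
qed

end

locale emb = Pi: pls P L + Pe: els P L + Qe: els P' L'
  for P :: "'a set" and L and P' :: "'b set" and L' +
  fixes f :: "'a \<Rightarrow> 'b" and n k :: nat
  assumes dimP: "is_dim P L P n" and dimQ: "is_dim P' L' P' n"
    and se: "strong_embedding P L P' L' f" and kn: "k < n"
    and bij: "bij_betw (\<lambda>S. span P' L' (f ` S)) (Grass P L k) (Grass P' L' k)"
begin

lemma fP: "f ` P \<subseteq> P'" using se unfolding strong_embedding_def by (elim conjE)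
lemma finj: "inj_on f P" using se unfolding strong_embedding_def by (elim conjE)
lemma fcol: "p \<in> P \<Longrightarrow> q \<in> P \<Longrightarrow> r \<in> P \<Longrightarrow> collinear_set L {p, q, r} \<Longrightarrow> collinear_set L' {f p, f q, f r}"
proof -
  have "\<forall>p\<in>P. \<forall>q\<in>P. \<forall>r\<in>P. collinear_set L {p, q, r} \<longrightarrow> collinear_set L' {f p, f q, f r}"
    using se unfolding strong_embedding_def by (elim conjE)
  then show "p \<in> P \<Longrightarrow> q \<in> P \<Longrightarrow> r \<in> P \<Longrightarrow> collinear_set L {p, q, r} \<Longrightarrow> collinear_set L' {f p, f q, f r}" by blast
qed
lemma fncol: "p \<in> P \<Longrightarrow> q \<in> P \<Longrightarrow> r \<in> P \<Longrightarrow> \<not> collinear_set L {p, q, r} \<Longrightarrow> \<not> collinear_set L' {f p, f q, f r}"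
proof -
  have "\<forall>p\<in>P. \<forall>q\<in>P. \<forall>r\<in>P. \<not> collinear_set L {p, q, r} \<longrightarrow> \<not> collinear_set L' {f p, f q, f r}"
    using se unfolding strong_embedding_def by (elim conjE)
  then show "p \<in> P \<Longrightarrow> q \<in> P \<Longrightarrow> r \<in> P \<Longrightarrow> \<not> collinear_set L {p, q, r} \<Longrightarrow> \<not> collinear_set L' {f p, f q, f r}" by blast
qed
lemma findep: "independent P L X \<Longrightarrow> independent P' L' (f ` X)"
proof -
  have "\<forall>X. independent P L X \<longrightarrow> independent P' L' (f ` X)"
    using se unfolding strong_embedding_def by (elim conjE)
  then show "independent P L X \<Longrightarrow> independent P' L' (f ` X)" by blast
qed

lemma fspan:
  assumes X: "X \<subseteq> P" shows "f ` span P L X \<subseteq> span P' L' (f ` X)"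
proof -
  let ?S = "{x \<in> P. f x \<in> span P' L' (f ` X)}"
  have fX: "f ` X \<subseteq> P'" using X fP by blast
  have sub': "subspace P' L' (span P' L' (f ` X))" using Qe.span_subspace[OF fX] .
  have "subspace P L ?S"
  proof (rule Pi.subspaceI)
    show "?S \<subseteq> P" by blast
    fix p q assume p: "p \<in> ?S" and q: "q \<in> ?S" and pq: "p \<noteq> q"
    show "line_through L p q \<subseteq> ?S"
    proof
      fix r assume r: "r \<in> line_through L p q"
      have l: "line_through L p q \<in> L" "p \<in> line_through L p q" "q \<in> line_through L p q"
        using Pi.line_props[of p q] p q pq by auto
      have rP: "r \<in> P" using r l(1) Pi.line_sub by blast
      have "collinear_set L {p, q, r}" unfolding collinear_set_def using l r by blast
      then have "collinear_set L' {f p, f q, f r}" using fcol p q rP by blast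
      then obtain l' where l': "l' \<in> L'" "f p \<in> l'" "f q \<in> l'" "f r \<in> l'" unfolding collinear_set_def by blast
      have fpq: "f p \<noteq> f q" using finj p q pq unfolding inj_on_def by blast
      have "line_through L' (f p) (f q) = l'" using Qe.line_unique[OF l'(1-3) fpq] .
      moreover have "line_through L' (f p) (f q) \<subseteq> span P' L' (f ` X)"
        using Qe.subspaceD[OF sub'] p q fpq by blast
      ultimately show "r \<in> ?S" using l'(4) rP by blast
    qed
  qed
  moreover have "X \<subseteq> ?S" using X Qe.span_inc[of "f ` X"] by blast
  ultimately have "span P L X \<subseteq> ?S" by (rule Pi.span_least)
  then show ?thesis by blast
qed

lemma fspan_eq:
  assumes X: "X \<subseteq> P" shows "span P' L' (f ` span P L X) = span P' L' (f ` X)"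
proof
  have fX: "f ` X \<subseteq> P'" using X fP by blast
  show "span P' L' (f ` span P L X) \<subseteq> span P' L' (f ` X)"
    using Qe.span_sub_span[OF fspan[OF X] fX] .
  show "span P' L' (f ` X) \<subseteq> span P' L' (f ` span P L X)"
    using Pi.span_inc[of X] by (intro Qe.span_mono) blast
qed

lemma reflect:
  assumes B: "independent P L B" and z: "z \<in> P" and fz: "f z \<in> span P' L' (f ` B)"
  shows "z \<in> span P L B"
proof (rule ccontr)
  assume nz: "z \<notin> span P L B"
  have i: "independent P L (insert z B)" using Pe.indep_insert[OF B z nz] .
  have zB: "z \<notin> B" using nz Pi.span_inc by blast
  have BP: "B \<subseteq> P" using Pe.indep_sub[OF B] .
  have "f ` insert z B - {f z} = f ` B"
  proof -
    have "f z \<notin> f ` B" using finj zB z BP unfolding inj_on_def by blast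
    then show ?thesis by auto
  qed
  moreover have "f z \<notin> span P' L' (f ` insert z B - {f z})"
    by (rule Qe.indep_notin[OF findep[OF i]]) simp
  ultimately show False using fz by simp
qed


lemma surj_aux:
  assumes p'P: "p' \<in> P'" and np: "p' \<notin> f ` P"
  shows False
proof -
  let ?sp = "span P L" and ?sp' = "span P' L'"
  define Good where "Good X \<longleftrightarrow> independent P L X \<and> finite X \<and> p' \<in> ?sp' (f ` X)" for X
  have i1: "independent P' L' {p'}" unfolding Qe.indep_iff using p'P Qe.span_empty by simp
  obtain Z' where Z': "{p'} \<subseteq> Z'" "independent P' L' Z'" "finite Z'" "card Z' = card {p'} + k"
    using Qe.extend[OF dimQ i1, of k] kn by auto
  have "is_dim P' L' (?sp' Z') k" using Qe.dim_of_indep[OF Z'(2,3)] Z'(4) by simp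
  then have "?sp' Z' \<in> Grass P' L' k" unfolding Grass_def by simp
  then have "?sp' Z' \<in> (\<lambda>S. ?sp' (f ` S)) ` Grass P L k" using bij_betw_imp_surj_on[OF bij] by simp
  then obtain S where S: "S \<in> Grass P L k" "?sp' Z' = ?sp' (f ` S)" by (rule imageE)
  have "is_dim P L S k" using S(1) unfolding Grass_def by simp
  then obtain X0 where X0: "independent P L X0" "finite X0" "card X0 = Suc k" "?sp X0 = S" "X0 \<subseteq> P"
    by (rule Pe.basis_of_dim)
  have "?sp' (f ` X0) = ?sp' Z'" using fspan_eq[OF X0(5)] X0(4) S(2) by simp
  then have "p' \<in> ?sp' (f ` X0)" using Z'(1) Qe.span_inc[of Z'] by auto
  then have "Good X0" unfolding Good_def using X0 by simp
  obtain X where X: "Good X" and Xmin: "\<And>Y. Good Y \<Longrightarrow> card X \<le> card Y"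
    using ex_has_least_nat[of Good X0 card, OF \<open>Good X0\<close>] by blast
  have Xi: "independent P L X" and Xf: "finite X" and pX: "p' \<in> ?sp' (f ` X)" using X unfolding Good_def by auto
  have XP: "X \<subseteq> P" using Pe.indep_sub[OF Xi] .
  have cXk: "card X \<le> Suc k" using Xmin[OF \<open>Good X0\<close>] X0(3) by simp
  have "X \<noteq> {}" using pX Qe.span_empty by auto
  moreover have "card X \<noteq> 1"
  proof
    assume "card X = 1"
    then obtain x where x: "X = {x}" using card_1_singletonE by blast
    then have "f x \<in> P'" using XP fP by auto
    then have "?sp' (f ` X) = {f x}" using x Qe.span_single by simp
    then show False using pX np x XP by auto
  qed
  moreover have "card X \<noteq> 0" using Xf \<open>X \<noteq> {}\<close> by simp
  ultimately have c2: "card X \<ge> 2" by linarith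
  obtain a b where ab: "a \<in> X" "b \<in> X" "a \<noteq> b"
  proof -
    obtain Y where "Y \<subseteq> X" "card Y = 2" using c2 by (meson obtain_subset_with_card_n)
    then obtain a b where "Y = {a,b}" "a \<noteq> b" by (meson card_2_iff)
    then show ?thesis using that \<open>Y \<subseteq> X\<close> by blast
  qed
  define W where "W = X - {a, b}"
  have WX: "W \<subseteq> X" unfolding W_def by blast
  have Wi: "independent P L W" using Pi.indep_subset[OF Xi WX] .
  have Wf: "finite W" using Xf WX finite_subset by blast
  have cW: "card W + 2 = card X" unfolding W_def using ab Xf c2 by (simp add: card_Diff_subset)
  have pW: "p' \<notin> ?sp' (f ` W)"
  proof
    assume "p' \<in> ?sp' (f ` W)"
    then have "Good W" unfolding Good_def using Wi Wf by simp
    then have "card X \<le> card W" by (rule Xmin)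
    then show False using cW by simp
  qed
  have "card X + (Suc (Suc k) - card X) \<le> Suc n" using cXk kn by simp
  then obtain Y where Y: "X \<subseteq> Y" "independent P L Y" "finite Y" "card Y = card X + (Suc (Suc k) - card X)"
    using Pe.extend[OF dimP Xi Xf, of "Suc (Suc k) - card X"] by blast
  have cY: "card Y = Suc (Suc k)" using Y(4) cXk by simp
  have YP: "Y \<subseteq> P" using Pe.indep_sub[OF Y(2)] .
  define Z where "Z = Y - X"
  have Zf: "finite Z" unfolding Z_def using Y(3) by simp
  have XZ: "X \<union> Z = Y" "X \<inter> Z = {}" unfolding Z_def using Y(1) by auto
  have cZ: "card Z = Suc (Suc k) - card X" unfolding Z_def using Y(1,3) cY Xf by (simp add: card_Diff_subset)
  have injY: "inj_on f Y" using finj YP inj_on_subset by blast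
  have WZ: "W \<union> Z \<subseteq> Y" using WX XZ by blast
  have WZi: "independent P' L' (f ` (W \<union> Z))" using findep[OF Pi.indep_subset[OF Y(2) WZ]] .
  have pWZ: "p' \<notin> ?sp' (f ` (W \<union> Z))"
  proof
    assume a1: "p' \<in> ?sp' (f ` (W \<union> Z))"
    have "f ` X \<union> f ` Z = f ` Y" using XZ by auto
    then have i2: "independent P' L' (f ` X \<union> f ` Z)" using findep[OF Y(2)] by simp
    have "f ` (X \<inter> Z) = f ` X \<inter> f ` Z" using inj_on_image_Int[OF injY, of X Z] XZ by blast
    then have dj: "f ` X \<inter> f ` Z = {}" using XZ by simp
    have fWX: "f ` W \<subseteq> f ` X" using WX by (rule image_mono)
    have fZf: "finite (f ` Z)" using Zf by simp
    have "?sp' (f ` X) \<inter> ?sp' (f ` W \<union> f ` Z) \<subseteq> ?sp' (f ` W)"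
      by (rule Qe.modular[OF fZf fWX i2 dj])
    moreover have "f ` (W \<union> Z) = f ` W \<union> f ` Z" by auto
    ultimately show False using a1 pX pW by auto
  qed
  define D2 where "D2 = insert p' (f ` (W \<union> Z))"
  have D2i: "independent P' L' D2" unfolding D2_def using Qe.indep_insert[OF WZi p'P pWZ] .
  have D2f: "finite D2" unfolding D2_def using Wf Zf by simp
  have WZd: "W \<inter> Z = {}" using XZ WX by blast
  have "card (W \<union> Z) = card W + card Z" by (rule card_Un_disjoint[OF Wf Zf WZd])
  moreover have "card (f ` (W \<union> Z)) = card (W \<union> Z)" using inj_on_subset[OF injY WZ] by (rule card_image)
  moreover have "p' \<notin> f ` (W \<union> Z)"
  proof
    assume "p' \<in> f ` (W \<union> Z)"
    moreover have "f ` (W \<union> Z) \<subseteq> ?sp' (f ` (W \<union> Z))" by (rule Qe.span_inc)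
    ultimately have "p' \<in> ?sp' (f ` (W \<union> Z))" by (rule rev_subsetD)
    then show False using pWZ by contradiction
  qed
  ultimately have "card D2 = Suc (card W + card Z)" unfolding D2_def using Wf Zf by simp
  then have cD2: "card D2 = Suc k" using cW cZ cXk by simp
  have "is_dim P' L' (?sp' D2) k" using Qe.dim_of_indep[OF D2i D2f cD2] .
  then have "?sp' D2 \<in> Grass P' L' k" unfolding Grass_def by simp
  then have "?sp' D2 \<in> (\<lambda>S. ?sp' (f ` S)) ` Grass P L k" using bij_betw_imp_surj_on[OF bij] by simp
  then obtain S2 where S2: "S2 \<in> Grass P L k" "?sp' D2 = ?sp' (f ` S2)" by (rule imageE)
  have "is_dim P L S2 k" using S2(1) unfolding Grass_def by simp
  then obtain B2 where B2: "independent P L B2" "finite B2" "card B2 = Suc k" "?sp B2 = S2" "B2 \<subseteq> P"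
    by (rule Pe.basis_of_dim)
  have S2'': "?sp' (f ` B2) = ?sp' D2" using fspan_eq[OF B2(5)] B2(4) S2(2) by simp
  have WZS2: "W \<union> Z \<subseteq> S2"
  proof
    fix w assume w: "w \<in> W \<union> Z"
    have "f w \<in> ?sp' D2" using w Qe.span_inc[of D2] unfolding D2_def by blast
    then have "w \<in> ?sp B2" using reflect[OF B2(1)] w WZ YP S2'' by blast
    then show "w \<in> S2" using B2(4) by simp
  qed
  have fYP: "f ` Y \<subseteq> P'" using YP fP by blast
  have D2Y: "?sp' D2 \<subseteq> ?sp' (f ` Y)"
  proof (rule Qe.span_sub_span[OF _ fYP])
    have "?sp' (f ` X) \<subseteq> ?sp' (f ` Y)" using Y(1) by (intro Qe.span_mono) blast
    then show "D2 \<subseteq> ?sp' (f ` Y)" unfolding D2_def using pX WZ Qe.span_inc[of "f ` Y"] by blast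
  qed
  have S2Y: "S2 \<subseteq> ?sp Y"
  proof -
    have "B2 \<subseteq> ?sp Y"
    proof
      fix c assume c: "c \<in> B2"
      have "f c \<in> ?sp' (f ` B2)" using c Qe.span_inc by blast
      then have "f c \<in> ?sp' (f ` Y)" using S2'' D2Y by blast
      then show "c \<in> ?sp Y" using reflect[OF Y(2)] c B2(5) by blast
    qed
    then show ?thesis using Pi.span_sub_span[OF _ YP] B2(4) by blast
  qed
  have S2sub: "subspace P L S2" using Pi.span_subspace[OF B2(5)] B2(4) by simp
  have aP: "a \<in> P" "b \<in> P" using ab XP by auto
  have anW: "a \<notin> ?sp W"
  proof -
    have "?sp W \<subseteq> ?sp (X - {a})" unfolding W_def by (intro Pi.span_mono) blast
    then show ?thesis using Pe.indep_notin[OF Xi ab(1)] by blast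
  qed
  have bnW: "b \<notin> ?sp W"
  proof -
    have "?sp W \<subseteq> ?sp (X - {b})" unfolding W_def by (intro Pi.span_mono) blast
    then show ?thesis using Pe.indep_notin[OF Xi ab(2)] by blast
  qed
  obtain u where u: "u \<in> S2" "u \<in> ?sp X" "u \<notin> ?sp W" "u \<in> P"
  proof (cases "a \<in> S2")
    case True
    then show ?thesis using that[of a] anW aP ab Pi.span_inc[of X] by blast
  next
    case aS: False
    show ?thesis
    proof (cases "b \<in> S2")
      case True
      then show ?thesis using that[of b] bnW aP ab Pi.span_inc[of X] by blast
    next
      case bS: False
      have aB2: "a \<notin> ?sp B2" using aS B2(4) by simp
      have iaB: "independent P L (insert a B2)" using Pe.indep_insert[OF B2(1) aP(1) aB2] .
      have aB2': "a \<notin> B2" using aB2 Pi.span_inc by blast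
      have "card (insert a B2) = Suc (Suc k)" using aB2' B2(2,3) by simp
      then have d1: "is_dim P L (?sp (insert a B2)) (Suc k)" using Pe.dim_of_indep[OF iaB] B2(2) by simp
      have d2: "is_dim P L (?sp Y) (Suc k)" using Pe.dim_of_indep[OF Y(2,3)] cY by simp
      have "insert a B2 \<subseteq> ?sp Y" using S2Y B2(4) Pi.span_inc[of B2] Pi.span_inc[of Y] Y(1) ab(1) by blast
      then have "?sp (insert a B2) \<subseteq> ?sp Y" using Pi.span_sub_span[OF _ YP] by blast
      then have e: "?sp (insert a B2) = ?sp Y" using Pe.dim_eq_sub[OF d1 d2] by simp
      have "?sp (insert a B2) \<subseteq> ?sp (insert a S2)" using Pi.span_inc[of B2] B2(4) by (intro Pi.span_mono) blast
      then have "b \<in> ?sp (insert a S2)" using e Pi.span_inc[of Y] Y(1) ab(2) by blast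
      then have "b = a \<or> b \<in> S2 \<or> (\<exists>h\<in>S2. b \<in> line_through L a h)"
        using Pi.span_insert_J[OF S2sub aP(1) aS] by blast
      then obtain h where h: "h \<in> S2" "b \<in> line_through L a h" using ab(3) bS by blast
      have hP: "h \<in> P" using h(1) Pi.subspace_sub[OF S2sub] by blast
      have ha: "h \<noteq> a" "h \<noteq> b" using h aS bS by auto
      have lah: "line_through L a h \<in> L" "a \<in> line_through L a h" "h \<in> line_through L a h"
        using Pi.line_props[OF aP(1) hP] ha by auto
      have "line_through L a b = line_through L a h" using Pi.line_unique[OF lah(1,2) h(2) ab(3)] .
      then have hab: "h \<in> ?sp {a,b}" using Pi.span_pair[OF aP ab(3)] lah by simp
      have "?sp {a,b} \<subseteq> ?sp X" using ab by (intro Pi.span_mono) blast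
      then have hX: "h \<in> ?sp X" using hab by blast
      have hW: "h \<notin> ?sp W"
      proof
        assume hW: "h \<in> ?sp W"
        have "line_through L a h = ?sp {a,h}" using Pi.span_pair[OF aP(1) hP] ha by simp
        also have "\<dots> \<subseteq> ?sp (X - {b})"
        proof (rule Pi.span_sub_span)
          show "X - {b} \<subseteq> P" using XP by blast
          have "?sp W \<subseteq> ?sp (X - {b})" unfolding W_def by (intro Pi.span_mono) blast
          then show "{a, h} \<subseteq> ?sp (X - {b})" using hW ab Pi.span_inc[of "X - {b}"] by blast
        qed
        finally show False using h(2) Pe.indep_notin[OF Xi ab(2)] by blast
      qed
      show ?thesis using that[of h] h(1) hX hW hP by blast
    qed
  qed
  define Q where "Q = insert u W"
  have Qi: "independent P L Q" unfolding Q_def using Pe.indep_insert[OF Wi u(4) u(3)] .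
  have uW: "u \<notin> W" using u(3) Pi.span_inc by blast
  have cQ: "card Q < card X" unfolding Q_def using uW Wf cW by simp
  have pQ: "p' \<in> ?sp' (f ` Q)"
  proof (rule ccontr)
    assume npQ: "p' \<notin> ?sp' (f ` Q)"
    define D where "D = insert p' (f ` Q)"
    have QP: "Q \<subseteq> P" using Pe.indep_sub[OF Qi] .
    have injQ: "inj_on f Q" using finj QP inj_on_subset by blast
    have Di: "independent P' L' D" unfolding D_def using Qe.indep_insert[OF findep[OF Qi] p'P npQ] .
    have Qf: "finite Q" unfolding Q_def using Wf by simp
    have Df: "finite D" unfolding D_def using Qf by simp
    have "p' \<notin> f ` Q" using npQ Qe.span_inc by blast
    then have cD: "card D = card X" unfolding D_def using card_image[OF injQ] Qf cQ
      unfolding Q_def using uW Wf cW by simp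
    have injX: "inj_on f X" using finj XP inj_on_subset by blast
    have cfX: "card (f ` X) = card X" using card_image[OF injX] .
    obtain mm where mm: "card X = Suc mm" using c2 by (metis Suc_le_D numeral_2_eq_2)
    have dD: "is_dim P' L' (?sp' D) mm" using Qe.dim_of_indep[OF Di Df] cD mm by simp
    have dX: "is_dim P' L' (?sp' (f ` X)) mm" using Qe.dim_of_indep[OF findep[OF Xi]] cfX mm Xf by simp
    have QX: "Q \<subseteq> ?sp X" unfolding Q_def using u(2) WX Pi.span_inc[of X] by blast
    have fXP: "f ` X \<subseteq> P'" using XP fP by blast
    have "D \<subseteq> ?sp' (f ` X)"
    proof -
      have "f ` Q \<subseteq> f ` ?sp X" using QX by blast
      then show ?thesis unfolding D_def using fspan[OF XP] pX by blast
    qed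
    then have "?sp' D \<subseteq> ?sp' (f ` X)" using Qe.span_sub_span[OF _ fXP] by blast
    then have eD: "?sp' D = ?sp' (f ` X)" using Qe.dim_eq_sub[OF dD dX] by simp
    have QS2: "Q \<subseteq> S2" unfolding Q_def using u(1) WZS2 by blast
    have fB2P: "f ` B2 \<subseteq> P'" using B2(5) fP by blast
    have "D \<subseteq> ?sp' (f ` B2)"
    proof -
      have "p' \<in> ?sp' D2" unfolding D2_def using Qe.span_inc[of D2] unfolding D2_def by blast
      moreover have "f ` Q \<subseteq> ?sp' (f ` S2)" using QS2 Qe.span_inc[of "f ` S2"] by blast
      ultimately show ?thesis unfolding D_def using S2'' S2(2) by blast
    qed
    then have "?sp' D \<subseteq> ?sp' (f ` B2)" using Qe.span_sub_span[OF _ fB2P] by blast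
    then have "f ` X \<subseteq> ?sp' (f ` B2)" using eD Qe.span_inc[of "f ` X"] by blast
    then have "X \<subseteq> ?sp B2" using reflect[OF B2(1)] XP by blast
    then have "Y \<subseteq> ?sp B2" using XZ WZS2 B2(4) by blast
    then have "card Y \<le> card B2" using Pe.steinitz[OF B2(2,5) Y(3,2)] by blast
    then show False using cY B2(3) by simp
  qed
  have "Good Q" unfolding Good_def using Qi pQ Wf unfolding Q_def by simp
  then have "card X \<le> card Q" by (rule Xmin)
  then show False using cQ by simp
qed


lemma surj: "f ` P = P'"
  using fP surj_aux by blast

lemma line_image:
  assumes l: "l \<in> L" and pq: "p \<in> l" "q \<in> l" "p \<noteq> q"
  shows "f ` l = line_through L' (f p) (f q)"
proof -
  have lP: "l \<subseteq> P" using Pi.line_sub[OF l] .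
  have pP: "p \<in> P" "q \<in> P" using pq lP by auto
  have fpq: "f p \<noteq> f q" using finj pP pq(3) unfolding inj_on_def by blast
  have fpP: "f p \<in> P'" "f q \<in> P'" using fP pP by auto
  have l': "line_through L' (f p) (f q) \<in> L'" "f p \<in> line_through L' (f p) (f q)" "f q \<in> line_through L' (f p) (f q)"
    using Qe.line_props[OF fpP fpq] by auto
  show ?thesis
  proof
    show "f ` l \<subseteq> line_through L' (f p) (f q)"
    proof
      fix y assume "y \<in> f ` l"
      then obtain r where r: "r \<in> l" "y = f r" by blast
      have "collinear_set L {p, q, r}" unfolding collinear_set_def using l pq r by blast
      then have "collinear_set L' {f p, f q, f r}" using fcol pP r lP by blast
      then obtain m where m: "m \<in> L'" "f p \<in> m" "f q \<in> m" "f r \<in> m" unfolding collinear_set_def by blast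
      have "line_through L' (f p) (f q) = m" using Qe.line_unique[OF m(1-3) fpq] .
      then show "y \<in> line_through L' (f p) (f q)" using m r by simp
    qed
    show "line_through L' (f p) (f q) \<subseteq> f ` l"
    proof
      fix y assume y: "y \<in> line_through L' (f p) (f q)"
      have "y \<in> P'" using y l'(1) Qe.line_sub by blast
      then obtain r where r: "r \<in> P" "y = f r" using surj by blast
      show "y \<in> f ` l"
      proof (rule ccontr)
        assume "y \<notin> f ` l"
        then have rl: "r \<notin> l" using r by blast
        have "\<not> collinear_set L {p, q, r}"
        proof
          assume "collinear_set L {p, q, r}"
          then obtain m where m: "m \<in> L" "p \<in> m" "q \<in> m" "r \<in> m" unfolding collinear_set_def by blast
          have "m = l" using Pi.line_unique[OF m(1-3) pq(3)] Pi.line_unique[OF l pq] by simp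
          then show False using m rl by simp
        qed
        then have "\<not> collinear_set L' {f p, f q, f r}" using fncol pP r by blast
        moreover have "collinear_set L' {f p, f q, f r}" unfolding collinear_set_def using l' y r by blast
        ultimately show False by contradiction
      qed
    qed
  qed
qed

lemma collin: "collineation P L P' L' f"
  unfolding collineation_def
proof
  show "bij_betw f P P'" unfolding bij_betw_def using finj surj by simp
  show "(\<lambda>l. f ` l) ` L = L'"
  proof
    show "(\<lambda>l. f ` l) ` L \<subseteq> L'"
    proof
      fix l' assume "l' \<in> (\<lambda>l. f ` l) ` L"
      then obtain l where l: "l \<in> L" "l' = f ` l" by blast
      have "\<forall>l\<in>L. l \<subseteq> P \<and> l \<noteq> P \<and> (\<exists>p q. p \<in> l \<and> q \<in> l \<and> p \<noteq> q)"
        using Pi.ls unfolding linear_space_def by (rule conjunct1)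
      then obtain p q where pq: "p \<in> l" "q \<in> l" "p \<noteq> q" using l(1) by blast
      have "l' = line_through L' (f p) (f q)" using line_image[OF l(1) pq] l(2) by simp
      moreover have "p \<in> P" "q \<in> P" using pq Pi.line_sub[OF l(1)] by auto
      moreover then have "f p \<noteq> f q" using finj pq(3) unfolding inj_on_def by blast
      ultimately show "l' \<in> L'" using Qe.line_props fP by blast
    qed
    show "L' \<subseteq> (\<lambda>l. f ` l) ` L"
    proof
      fix l' assume l': "l' \<in> L'"
      have "\<forall>l\<in>L'. l \<subseteq> P' \<and> l \<noteq> P' \<and> (\<exists>p q. p \<in> l \<and> q \<in> l \<and> p \<noteq> q)"
        using Qe.ls unfolding linear_space_def by (rule conjunct1)
      then obtain p' q' where pq: "p' \<in> l'" "q' \<in> l'" "p' \<noteq> q'" using l' by blast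
      have "p' \<in> P'" "q' \<in> P'" using pq Qe.line_sub[OF l'] by auto
      then obtain p q where p: "p \<in> P" "p' = f p" and q: "q \<in> P" "q' = f q" using surj by blast
      have pq2: "p \<noteq> q" using p q pq(3) by blast
      have lpq: "line_through L p q \<in> L" "p \<in> line_through L p q" "q \<in> line_through L p q"
        using Pi.line_props[OF p(1) q(1) pq2] by auto
      have "f ` line_through L p q = line_through L' (f p) (f q)" using line_image[OF lpq pq2] .
      also have "\<dots> = l'" using Qe.line_unique[OF l'] pq p q by simp
      finally show "l' \<in> (\<lambda>l. f ` l) ` L" using lpq(1) by blast
    qed
  qed
qed

end

theorem proposition2p4:
  fixes P :: "'a set" and L :: "'a set set" and P' :: "'b set" and L' :: "'b set set"
    and f :: "'a \<Rightarrow> 'b" and n k :: nat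
  assumes "projective_space P L" and "is_dim P L P n"
    and "linear_space P' L'" and "is_dim P' L' P' n" and "exchange_axiom P' L'"
    and "strong_embedding P L P' L' f"
    and "k < n"
    and "bij_betw (\<lambda>S. span P' L' (f ` S)) (Grass P L k) (Grass P' L' k)"
  shows "collineation P L P' L' f"
proof -
  have lsP: "linear_space P L" using assms(1) unfolding projective_space_def by (rule conjunct1)
  interpret Pi: pls P L by (unfold_locales; fact lsP assms(1))
  have exP: "exchange_axiom P L" by (rule Pi.proj_exchange)
  interpret e: emb P L P' L' f n k
    by (unfold_locales; fact lsP assms exP)
  show ?thesis by (rule e.collin)
qed

end
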